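(* Let $\mathbf P$ be a multi-cut polygon as in the context, with $Q(z)=\prod_{i=1}^{d+N}(z-x_i)$, and let $\mathcal S$ be the set of integer points $(n,y)\in\widetilde{\mathbf P}\setminus\mathbf P$ such that $(n,y-\frac12)$ lies on an upper oblique boundary segment of $\mathbf P$ or $(n,y+\frac12)$ lies on an upper vertical boundary segment of $\mathbf P$. Then for $(n,y)\in\mathcal S$, summing over the roots $z=y-N+n,\dots,y$ of $(z-y)_{N-n+1}$, $$\sum_{z=y-N+n}^{y}\frac{(N-n)!\,Q(z)}{(z-y)_{N-n+1}\,Q'(z)\,S^{(N)}_z(w)}=\frac1{S^{(n)}_y(w)},$$ where each summand means the value at $z$ of the rational function $\frac{(N-n)!\,Q(z)}{(z-y)_{N-n+1}Q'(z)}$ after cancellation of common factors, times $1/S^{(N)}_z(w)$.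
   Context: Coordinates $(m,x)\in\mathbb R^2$ ($m$ = height), lattice lines $m\in\mathbb Z$, $x\in\mathbb Z+\frac12$ (vertical), $x+m\in\mathbb Z+\frac12$ (oblique). Multi-cut polygon: fix integers $N\ge1$, $d\ge0$; $\widetilde{\mathbf P}=\{(m,x):0\le m\le N,\ -d-\frac12-m\le x\le x_1+\frac12\}$. $\mathbf P$ is obtained from $\widetilde{\mathbf P}$ by removing: a triangle at the upper-left corner with $b_0$ rows (bounded by the left side of $\widetilde{\mathbf P}$, $m=N$ and a vertical line); a triangle at the upper-right corner with $b_u$ rows (bounded by the right side, $m=N$ and an oblique line); $\ell$ disjoint triangular lower cuts with bases on $m=0$ (vertical left side, oblique right side), of total size $d$; $u-1$ disjoint triangular upper cuts of sizes $b_1,\dots,b_{u-1}$ with bases on $m=N$ (oblique left side, vertical right side); $\sum_0^ub_i=d+N$; all vertices on lines $x\in\mathbb Z+\frac12$. Upper oblique boundary segments: the right oblique side of $\mathbf P$ and the oblique sides of upper cuts; upper vertical boundary segments: the left vertical side of $\mathbf P$ and the vertical sides of upper cuts. $x_1>\dots>x_{d+N}$ are the integer points of $(\widetilde{\mathbf P}\setminus\mathbf P)\cap\{m=N\}$. Notation: $(a)_k=a(a+1)\cdots(a+k-1)$, $(a)_0=1$; $S^{(k)}_x(w)=w^{x+1}(1-w)^k$. *)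

theory Defs
  imports Complex_Main "HOL-Computational_Algebra.Computational_Algebra" "HOL-Computational_Algebra.Field_as_Ring"
begin

text \<open>Coordinates (m,x) in real x real, m = height.\<close>

definition Ptilde :: "nat \<Rightarrow> nat \<Rightarrow> int \<Rightarrow> (real \<times> real) set" where
  "Ptilde N d x1 = {(m, x). 0 \<le> m \<and> m \<le> real N \<and>
      - real d - 1/2 - m \<le> x \<and> x \<le> real_of_int x1 + 1/2}"

text \<open>Upper triangle (base on m = N, oblique left side, vertical right side) with bb rows,
  whose top row contains the integer points rr-bb+1, ..., rr.\<close>
definition up_tri :: "nat \<Rightarrow> nat \<Rightarrow> int \<Rightarrow> (real \<times> real) set" where
  "up_tri N bb rr = {(m, x). real N - real bb \<le> m \<and> m \<le> real N \<and>
      real_of_int rr - real bb + 1/2 + (real N - m) \<le> x \<and> x \<le> real_of_int rr + 1/2}"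

definition obl_side :: "nat \<Rightarrow> nat \<Rightarrow> int \<Rightarrow> (real \<times> real) set" where
  "obl_side N bb rr = {(m, x). real N - real bb \<le> m \<and> m \<le> real N \<and>
      x = real_of_int rr - real bb + 1/2 + (real N - m)}"

definition vert_side :: "nat \<Rightarrow> nat \<Rightarrow> int \<Rightarrow> (real \<times> real) set" where
  "vert_side N bb rr = {(m, x). real N - real bb \<le> m \<and> m \<le> real N \<and>
      x = real_of_int rr + 1/2}"

text \<open>Lower triangle (base on m = 0, vertical left side, oblique right side) of size aa,
  whose bottom row contains the integer points ll, ..., ll+aa-1.\<close>
definition low_tri :: "nat \<Rightarrow> int \<Rightarrow> (real \<times> real) set" where
  "low_tri aa ll = {(m, x). 0 \<le> m \<and> m \<le> real aa \<and>
      real_of_int ll - 1/2 \<le> x \<and> x \<le> real_of_int ll + real aa - 1/2 - m}"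

text \<open>The polygon P: upper triangles indexed 0..u (0 = upper-left corner, u = upper-right
  corner, 1..u-1 = upper cuts), lower cuts indexed 0..L-1.\<close>
definition Pset :: "nat \<Rightarrow> nat \<Rightarrow> int \<Rightarrow> nat \<Rightarrow> (nat \<Rightarrow> nat) \<Rightarrow> (nat \<Rightarrow> int)
    \<Rightarrow> nat \<Rightarrow> (nat \<Rightarrow> nat) \<Rightarrow> (nat \<Rightarrow> int) \<Rightarrow> (real \<times> real) set" where
  "Pset N d x1 u b r L a l = Ptilde N d x1
      - (\<Union>i\<in>{..u}. up_tri N (b i) (r i)) - (\<Union>j\<in>{..<L}. low_tri (a j) (l j))"

definition multicut_polygon :: "nat \<Rightarrow> nat \<Rightarrow> int \<Rightarrow> nat \<Rightarrow> (nat \<Rightarrow> nat) \<Rightarrow> (nat \<Rightarrow> int)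
    \<Rightarrow> nat \<Rightarrow> (nat \<Rightarrow> nat) \<Rightarrow> (nat \<Rightarrow> int) \<Rightarrow> bool" where
  "multicut_polygon N d x1 u b r L a l \<longleftrightarrow>
     N \<ge> 1 \<and> u \<ge> 1 \<and>
     \<comment> \<open>upper-left corner triangle is bounded by the (oblique) left side of Ptilde\<close>
     r 0 - int (b 0) + 1 = - int d - int N \<and>
     \<comment> \<open>upper-right corner triangle is bounded by the (vertical) right side of Ptilde\<close>
     r u = x1 \<and>
     \<comment> \<open>x1 is a removed integer point on the top row (it is then the largest one)\<close>
     (real N, real_of_int x1) \<in> Ptilde N d x1 - Pset N d x1 u b r L a l \<and>
     (\<forall>i\<in>{1..<u}. b i \<ge> 1) \<and>
     (\<forall>i\<le>u. up_tri N (b i) (r i) \<subseteq> Ptilde N d x1) \<and>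
     \<comment> \<open>upper triangles listed from left to right, with disjoint interiors\<close>
     (\<forall>i\<in>{1..u}. r (i - 1) \<le> r i - int (b i)) \<and>
     (\<Sum>i\<le>u. b i) = d + N \<and>
     (\<forall>j<L. a j \<ge> 1 \<and> low_tri (a j) (l j) \<subseteq> Ptilde N d x1) \<and>
     \<comment> \<open>lower cuts listed from left to right, with disjoint interiors\<close>
     (\<forall>j. Suc j < L \<longrightarrow> l j + int (a j) \<le> l (Suc j)) \<and>
     (\<Sum>j<L. a j) = d \<and>
     \<comment> \<open>upper and lower cuts are disjoint\<close>
     (\<forall>i\<le>u. \<forall>j<L. up_tri N (b i) (r i) \<inter> low_tri (a j) (l j) = {})"

text \<open>Integer points of (Ptilde - P) on the row m = N: the roots x_1 > ... > x_{d+N} of Q.\<close>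
definition top_points :: "nat \<Rightarrow> nat \<Rightarrow> int \<Rightarrow> nat \<Rightarrow> (nat \<Rightarrow> nat) \<Rightarrow> (nat \<Rightarrow> int)
    \<Rightarrow> nat \<Rightarrow> (nat \<Rightarrow> nat) \<Rightarrow> (nat \<Rightarrow> int) \<Rightarrow> int set" where
  "top_points N d x1 u b r L a l =
     {x. (real N, real_of_int x) \<in> Ptilde N d x1 - Pset N d x1 u b r L a l}"

definition Qpoly :: "nat \<Rightarrow> nat \<Rightarrow> int \<Rightarrow> nat \<Rightarrow> (nat \<Rightarrow> nat) \<Rightarrow> (nat \<Rightarrow> int)
    \<Rightarrow> nat \<Rightarrow> (nat \<Rightarrow> nat) \<Rightarrow> (nat \<Rightarrow> int) \<Rightarrow> real poly" where
  "Qpoly N d x1 u b r L a l = (\<Prod>x\<in>top_points N d x1 u b r L a l. [:- of_int x, 1:])"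

text \<open>Upper oblique boundary segments: oblique sides of the upper triangles
  1..u (upper cuts and right oblique side of P); upper vertical boundary segments:
  vertical sides of the upper triangles 0..u-1 (left vertical side of P and upper cuts).\<close>
definition Sset :: "nat \<Rightarrow> nat \<Rightarrow> int \<Rightarrow> nat \<Rightarrow> (nat \<Rightarrow> nat) \<Rightarrow> (nat \<Rightarrow> int)
    \<Rightarrow> nat \<Rightarrow> (nat \<Rightarrow> nat) \<Rightarrow> (nat \<Rightarrow> int) \<Rightarrow> (int \<times> int) set" where
  "Sset N d x1 u b r L a l =
     {(n, y). (real_of_int n, real_of_int y) \<in> Ptilde N d x1 - Pset N d x1 u b r L a l \<and>
        ((real_of_int n, real_of_int y - 1/2) \<in> (\<Union>i\<in>{1..u}. obl_side N (b i) (r i)) \<or>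
         (real_of_int n, real_of_int y + 1/2) \<in> (\<Union>i\<in>{..<u}. vert_side N (b i) (r i)))}"

definition poch_poly :: "int \<Rightarrow> nat \<Rightarrow> real poly" where
  "poch_poly y k = (\<Prod>j<k. [:of_int (int j - y), 1:])"

definition rat_val :: "real poly \<Rightarrow> real poly \<Rightarrow> real \<Rightarrow> real" where
  "rat_val p q z = poly (p div gcd p q) z / poly (q div gcd p q) z"

definition Sfun :: "nat \<Rightarrow> int \<Rightarrow> complex \<Rightarrow> complex" where
  "Sfun k x w = w powi (x + 1) * (1 - w) ^ k"

end

theory Submission
  imports Defs
begin


lemma rat_val_root:
  fixes p q p1 q1 :: "real poly"
  assumes "p = [:-c,1:] * p1" "q = [:-c,1:] * q1" "poly p1 c \<noteq> 0" "poly q1 c \<noteq> 0"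
  shows "rat_val p q c = poly p1 c / poly q1 c"
proof -
  define g where "g = gcd p q"
  define A where "A = p div g"
  define B where "B = q div g"
  have "p1 \<noteq> 0" using assms(3) by auto
  moreover have "[:-c,1:] \<noteq> (0::real poly)" by simp
  ultimately have p0: "p \<noteq> 0" using assms(1) by (metis no_zero_divisors)
  have g0: "g \<noteq> 0" using p0 g_def by auto
  have pA: "p = g * A" unfolding A_def g_def by simp
  have qB: "q = g * B" unfolding B_def g_def by simp
  have cop: "coprime A B" unfolding A_def B_def g_def using p0 div_gcd_coprime by blast
  have "g * (A * q1) = g * (B * p1)"
    using pA qB assms(1,2) by (metis mult.assoc mult.commute)
  hence e: "A * q1 = B * p1" using g0 by simp
  hence e2: "poly A c * poly q1 c = poly B c * poly p1 c" by (metis poly_mult)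
  have B0: "poly B c \<noteq> 0"
  proof
    assume "poly B c = 0"
    hence "poly A c = 0" using e2 assms(4) by simp
    hence "[:-c,1:] dvd A" "[:-c,1:] dvd B" using \<open>poly B c = 0\<close> by (simp_all add: poly_eq_0_iff_dvd)
    hence "is_unit [:-c,1:]" using cop coprime_common_divisor by blast
    thus False by (auto simp: is_unit_poly_iff)
  qed
  have "rat_val p q c = poly A c / poly B c" unfolding rat_val_def A_def B_def g_def by simp
  also have "\<dots> = poly p1 c / poly q1 c" using e2 B0 assms(4) by (simp add: field_simps)
  finally show ?thesis .
qed

lemma prod_shift_fact:
  assumes "t \<le> k"
  shows "(\<Prod>j\<in>{..k}-{t}. (real j - real t)) = (-1)^t * fact t * fact (k - t)"
  using assms
proof (induction k rule: dec_induct)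
  case base
  have "{..t}-{t} = {..<t}" by auto
  hence "(\<Prod>j\<in>{..t}-{t}. (real j - real t)) = (\<Prod>j<t. (- real t + real j))" by simp
  also have "\<dots> = pochhammer (- real t) t" by (simp add: pochhammer_prod atLeast0LessThan)
  also have "\<dots> = (-1)^t * fact t" by (simp add: pochhammer_minus pochhammer_fact)
  finally show ?case by simp
next
  case (step k)
  have "{..Suc k}-{t} = insert (Suc k) ({..k}-{t})" using step by auto
  hence "(\<Prod>j\<in>{..Suc k}-{t}. (real j - real t)) = (real (Suc k) - real t) * (\<Prod>j\<in>{..k}-{t}. (real j - real t))"
    by simp
  also have "\<dots> = (real (Suc k) - real t) * ((-1)^t * fact t * fact (k - t))" using step by simp
  also have "\<dots> = (-1)^t * fact t * fact (Suc k - t)"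
    using step by (simp add: Suc_diff_le of_nat_diff)
  finally show ?case .
qed



lemma int_half_le: "real_of_int a - 1/2 \<le> real_of_int b \<Longrightarrow> a \<le> b"
proof -
  assume h: "real_of_int a - 1/2 \<le> real_of_int b"
  have "real_of_int (a - b) < 1" using h by simp
  hence "a - b < 1" by linarith
  thus ?thesis by simp
qed

lemma geo:
  assumes M: "multicut_polygon N d x1 u b r L a l"
    and S: "(n, y) \<in> Sset N d x1 u b r L a l"
  shows "0 \<le> n" "n \<le> int N" "finite (top_points N d x1 u b r L a l)"
    "\<And>t. t \<le> nat (int N - n) \<Longrightarrow> y - int t \<in> top_points N d x1 u b r L a l"
proof -
  have inP: "(real_of_int n, real_of_int y) \<in> Ptilde N d x1"
   and notP: "(real_of_int n, real_of_int y) \<notin> Pset N d x1 u b r L a l"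
   and cond: "(real_of_int n, real_of_int y - 1/2) \<in> (\<Union>i\<in>{1..u}. obl_side N (b i) (r i)) \<or>
         (real_of_int n, real_of_int y + 1/2) \<in> (\<Union>i\<in>{..<u}. vert_side N (b i) (r i))"
    using S unfolding Sset_def by auto
  show n0: "0 \<le> n" and nN: "n \<le> int N" using inP unfolding Ptilde_def by auto
  have sub: "\<And>i. i \<le> u \<Longrightarrow> up_tri N (b i) (r i) \<subseteq> Ptilde N d x1"
    and disj: "\<And>i j. i \<le> u \<Longrightarrow> j < L \<Longrightarrow> up_tri N (b i) (r i) \<inter> low_tri (a j) (l j) = {}"
    using M unfolding multicut_polygon_def by auto
  have "finite {-int d - int N .. x1}" by simp
  moreover have "top_points N d x1 u b r L a l \<subseteq> {-int d - int N .. x1}"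
  proof
    fix x assume "x \<in> top_points N d x1 u b r L a l"
    hence h: "- real d - 1/2 - real N \<le> real_of_int x" "real_of_int x \<le> real_of_int x1 + 1/2"
      unfolding top_points_def Ptilde_def by auto
    have "-int d - int N \<le> x" using int_half_le[of "-int d - int N" x] h(1) by simp
    moreover have "x \<le> x1" using int_half_le[of x x1] h(2) by simp
    ultimately show "x \<in> {-int d - int N .. x1}" by simp
  qed
  ultimately show "finite (top_points N d x1 u b r L a l)" by (rule finite_subset[rotated])
  have "(real_of_int n, real_of_int y) \<in> (\<Union>i\<in>{..u}. up_tri N (b i) (r i)) \<or>
        (real_of_int n, real_of_int y) \<in> (\<Union>j\<in>{..<L}. low_tri (a j) (l j))"
    using inP notP unfolding Pset_def by blast
  moreover have "(real_of_int n, real_of_int y) \<notin> (\<Union>j\<in>{..<L}. low_tri (a j) (l j))"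
  proof
    assume "(real_of_int n, real_of_int y) \<in> (\<Union>j\<in>{..<L}. low_tri (a j) (l j))"
    then obtain j where j: "j < L" "(real_of_int n, real_of_int y) \<in> low_tri (a j) (l j)" by auto
    from j(2) have lj: "0 \<le> real_of_int n" "real_of_int n \<le> real (a j)"
      "real_of_int (l j) - 1/2 \<le> real_of_int y"
      "real_of_int y \<le> real_of_int (l j) + real (a j) - 1/2 - real_of_int n"
      unfolding low_tri_def by auto
    have ly: "l j \<le> y" using int_half_le lj(3) by blast
    have "y + n + 1 \<le> l j + int (a j)"
    proof -
      have "real_of_int (y + n) - 1/2 \<le> real_of_int (l j + int (a j) - 1)" using lj(4) by simp
      thus ?thesis using int_half_le by fastforce
    qed
    hence "real_of_int (y + n + 1) \<le> real_of_int (l j + int (a j))" by (simp only: of_int_le_iff)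
    hence ly2: "real_of_int y + 1 \<le> real_of_int (l j) + real (a j) - real_of_int n" by simp
    from cond show False
    proof
      assume "(real_of_int n, real_of_int y - 1/2) \<in> (\<Union>i\<in>{1..u}. obl_side N (b i) (r i))"
      then obtain i where i: "i \<in> {1..u}" "(real_of_int n, real_of_int y - 1/2) \<in> obl_side N (b i) (r i)" by auto
      hence "(real_of_int n, real_of_int y - 1/2) \<in> up_tri N (b i) (r i)"
        unfolding obl_side_def up_tri_def by auto
      moreover have "(real_of_int n, real_of_int y - 1/2) \<in> low_tri (a j) (l j)"
        using lj ly unfolding low_tri_def by auto
      ultimately show False using disj[of i j] i j by auto
    next
      assume "(real_of_int n, real_of_int y + 1/2) \<in> (\<Union>i\<in>{..<u}. vert_side N (b i) (r i))"
      then obtain i where i: "i < u" "(real_of_int n, real_of_int y + 1/2) \<in> vert_side N (b i) (r i)" by auto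
      hence "(real_of_int n, real_of_int y + 1/2) \<in> up_tri N (b i) (r i)"
        unfolding vert_side_def up_tri_def by auto
      moreover have "(real_of_int n, real_of_int y + 1/2) \<in> low_tri (a j) (l j)"
        using lj ly ly2 unfolding low_tri_def by auto
      ultimately show False using disj[of i j] i j by auto
    qed
  qed
  ultimately obtain i where i: "i \<le> u" "(real_of_int n, real_of_int y) \<in> up_tri N (b i) (r i)" by auto
  from i(2) have ui: "real_of_int (r i) - real (b i) + 1/2 + (real N - real_of_int n) \<le> real_of_int y"
    "real_of_int y \<le> real_of_int (r i) + 1/2" "real N - real (b i) \<le> real_of_int n"
    unfolding up_tri_def by auto
  fix t assume t: "t \<le> nat (int N - n)"
  hence "int t \<le> int N - n" using nN by linarith
  hence "real t \<le> real N - real_of_int n" by (metis of_int_diff of_int_le_iff of_int_of_nat_eq)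
  hence "(real N, real_of_int (y - int t)) \<in> up_tri N (b i) (r i)"
    using ui unfolding up_tri_def by auto
  moreover hence "(real N, real_of_int (y - int t)) \<in> Ptilde N d x1" using sub i(1) by auto
  ultimately show "y - int t \<in> top_points N d x1 u b r L a l"
    unfolding top_points_def Pset_def using i(1) by auto
qed



lemma Q_split:
  fixes T :: "int set"
  assumes "finite T" "c \<in> T"
  defines "Q \<equiv> (\<Prod>x\<in>T. [:- of_int x, 1:]) :: real poly"
  defines "R \<equiv> (\<Prod>x\<in>T-{c}. [:- of_int x, 1:]) :: real poly"
  shows "Q = [:- of_int c, 1:] * R" "poly R (of_int c) \<noteq> 0"
    "poly (pderiv Q) (of_int c) = poly R (of_int c)"
proof -
  show Qe: "Q = [:- of_int c, 1:] * R" unfolding Q_def R_def using assms(1,2) by (simp add: prod.remove)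
  show "poly R (of_int c) \<noteq> 0" unfolding R_def using assms(1)
    by (simp add: poly_prod prod_zero_iff)
  show "poly (pderiv Q) (of_int c) = poly R (of_int c)"
  proof -
    have d1: "pderiv [:- of_int c, 1:] = (1::real poly)" by (simp add: pderiv_pCons)
    have "pderiv Q = [:- of_int c, 1:] * pderiv R + R" unfolding Qe pderiv_mult d1 by simp
    hence "poly (pderiv Q) (of_int c) = poly [:- of_int c, 1:] (of_int c) * poly (pderiv R) (of_int c) + poly R (of_int c)"
      by (simp only: poly_add poly_mult)
    thus ?thesis by simp
  qed
qed

lemma poch_split:
  fixes y :: int
  assumes "t \<le> k"
  defines "P1 \<equiv> (\<Prod>j\<in>{..k}-{t}. [:of_int (int j - y), 1:]) :: real poly"
  shows "poch_poly y (Suc k) = [:- of_int (y - int t), 1:] * P1"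
    "poly P1 (of_int (y - int t)) = (-1)^t * fact t * fact (k - t)"
proof -
  have "poch_poly y (Suc k) = (\<Prod>j\<in>{..k}. [:of_int (int j - y), 1:])"
    unfolding poch_poly_def lessThan_Suc_atMost ..
  also have "\<dots> = [:of_int (int t - y), 1:] * P1" unfolding P1_def using assms(1)
    by (simp add: prod.remove)
  finally show "poch_poly y (Suc k) = [:- of_int (y - int t), 1:] * P1" by simp
  have "poly P1 (of_int (y - int t)) = (\<Prod>j\<in>{..k}-{t}. (real j - real t))"
    unfolding P1_def by (simp add: poly_prod)
  also have "\<dots> = (-1)^t * fact t * fact (k - t)" by (rule prod_shift_fact[OF assms(1)])
  finally show "poly P1 (of_int (y - int t)) = (-1)^t * fact t * fact (k - t)" .
qed

lemma value_at:
  fixes T :: "int set"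
  assumes "finite T" "y - int t \<in> T" "t \<le> k"
  defines "Q \<equiv> (\<Prod>x\<in>T. [:- of_int x, 1:]) :: real poly"
  shows "rat_val (smult (fact k) Q) (poch_poly y (Suc k) * pderiv Q) (of_int (y - int t))
     = (-1)^t * real (k choose t)"
proof -
  define c where "c = y - int t"
  define R :: "real poly" where "R = (\<Prod>x\<in>T-{c}. [:- of_int x, 1:])"
  define P1 :: "real poly" where "P1 = (\<Prod>j\<in>{..k}-{t}. [:of_int (int j - y), 1:])"
  note QS = Q_split[OF assms(1), of c, folded Q_def R_def c_def]
  note PS = poch_split[OF assms(3), of y, folded P1_def]
  have "rat_val (smult (fact k) Q) (poch_poly y (Suc k) * pderiv Q) (of_int c)
     = poly (smult (fact k) R) (of_int c) / poly (P1 * pderiv Q) (of_int c)"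
  proof (rule rat_val_root)
    show "smult (fact k) Q = [:- of_int c, 1:] * smult (fact k) R" using QS(1)[OF assms(2)[folded c_def]] by simp
    show "poch_poly y (Suc k) * pderiv Q = [:- of_int c, 1:] * (P1 * pderiv Q)" unfolding PS(1) c_def by (simp only: mult.assoc)
    show "poly (smult (fact k) R) (of_int c) \<noteq> 0" using QS(2)[OF assms(2)[folded c_def]] by simp
    show "poly (P1 * pderiv Q) (of_int c) \<noteq> 0"
      using QS(2,3)[OF assms(2)[folded c_def]] PS(2) c_def by simp
  qed
  also have "\<dots> = fact k / poly P1 (of_int c)"
    using QS(2,3)[OF assms(2)[folded c_def]] by simp
  also have "\<dots> = fact k / ((-1)^t * fact t * fact (k - t))" using PS(2) c_def by simp
  also have "\<dots> = (-1)^t * real (k choose t)"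
    using binomial_fact[OF assms(3), where 'a=real] by (simp add: field_simps)
  finally show ?thesis unfolding c_def .
qed



theorem lemma3p3:
  fixes N d u L :: nat and b a :: "nat \<Rightarrow> nat" and r l :: "nat \<Rightarrow> int"
    and x1 n y :: int and w :: complex
  assumes "multicut_polygon N d x1 u b r L a l"
    and "(n, y) \<in> Sset N d x1 u b r L a l"
    and "w \<noteq> 0" and "w \<noteq> 1"
  shows "(\<Sum>z\<in>{y - (int N - n)..y}.
            complex_of_real (rat_val (smult (fact (nat (int N - n))) (Qpoly N d x1 u b r L a l))
                    (poch_poly y (Suc (nat (int N - n))) * pderiv (Qpoly N d x1 u b r L a l))
                    (of_int z))
            / Sfun N z w)
         = 1 / Sfun (nat n) y w"
proof -
  note G = geo[OF assms(1,2)]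
  define k where "k = nat (int N - n)"
  define T where "T = top_points N d x1 u b r L a l"
  have kN: "int k = int N - n" unfolding k_def using G(2) by simp
  have Nk: "N = nat n + k" using kN G(1) by linarith
  have Qd: "Qpoly N d x1 u b r L a l = (\<Prod>x\<in>T. [:- of_int x, 1:])" unfolding Qpoly_def T_def ..
  define D where "D = w powi (y + 1) * (1 - w) ^ N"
  have D0: "D \<noteq> 0" unfolding D_def using assms(3,4) by simp
  have inj: "inj_on (\<lambda>t. y - int t) {..k}" by (auto simp: inj_on_def)
  have img: "{y - (int N - n)..y} = (\<lambda>t. y - int t) ` {..k}"
  proof
    show "(\<lambda>t. y - int t) ` {..k} \<subseteq> {y - (int N - n)..y}" using kN by auto
    show "{y - (int N - n)..y} \<subseteq> (\<lambda>t. y - int t) ` {..k}"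
    proof
      fix z assume "z \<in> {y - (int N - n)..y}"
      hence "z = y - int (nat (y - z))" "nat (y - z) \<in> {..k}" using kN by auto
      thus "z \<in> (\<lambda>t. y - int t) ` {..k}" by blast
    qed
  qed
  have trm: "complex_of_real (rat_val (smult (fact k) (Qpoly N d x1 u b r L a l))
                    (poch_poly y (Suc k) * pderiv (Qpoly N d x1 u b r L a l))
                    (of_int (y - int t))) / Sfun N (y - int t) w
       = of_nat (k choose t) * (- w) ^ t * 1 ^ (k - t) / D" if t: "t \<le> k" for t
  proof -
    have r1: "rat_val (smult (fact k) (Qpoly N d x1 u b r L a l))
                    (poch_poly y (Suc k) * pderiv (Qpoly N d x1 u b r L a l))
                    (of_int (y - int t)) = (-1)^t * real (k choose t)"
      unfolding Qd by (rule value_at[OF G(3)[folded T_def] G(4)[folded T_def k_def, OF t] t])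
    have r2: "Sfun N (y - int t) w = D / w ^ t"
    proof -
      have e1: "w powi (y + 1 - int t) = w powi (y + 1) / w powi (int t)"
        by (rule power_int_diff) (use assms(3) in blast)
      have e2: "y - int t + 1 = y + 1 - int t" by simp
      show ?thesis unfolding Sfun_def D_def e2 e1 power_int_of_nat by (rule times_divide_eq_left)
    qed
    have r3: "complex_of_real ((-1)^t * real (k choose t)) = (-1)^t * of_nat (k choose t)" by simp
    have r4: "(-1)^t * of_nat (k choose t) / (D / w ^ t) = of_nat (k choose t) * (- w) ^ t * 1 ^ (k - t) / D"
      unfolding power_minus[of w t] power_one mult_1_right by (simp add: divide_divide_eq_right mult_ac)
    show ?thesis by (simp only: r1 r2 r3 r4)
  qed
  have "(\<Sum>z\<in>{y - (int N - n)..y}.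
            complex_of_real (rat_val (smult (fact (nat (int N - n))) (Qpoly N d x1 u b r L a l))
                    (poch_poly y (Suc (nat (int N - n))) * pderiv (Qpoly N d x1 u b r L a l))
                    (of_int z))
            / Sfun N z w)
      = (\<Sum>t\<le>k. of_nat (k choose t) * (- w) ^ t * 1 ^ (k - t) / D)"
    unfolding img k_def[symmetric] sum.reindex[OF inj] o_def by (rule sum.cong[OF refl], rule trm, simp)
  also have "\<dots> = (- w + 1) ^ k / D" unfolding binomial_ring[of "- w" 1 k] sum_divide_distrib by simp
  also have "\<dots> = 1 / Sfun (nat n) y w"
    unfolding D_def Sfun_def Nk using assms(3,4) by (simp add: power_add field_simps)
  finally show ?thesis .
qed

end
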